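(* Let $A \in \mathbb{C}^{n \times n}$, and fix $A^-\in A\{1\}$ and $A^{GD}\in A\{GD\}$. For $X\in\mathbb{C}^{n\times n}$ the following are equivalent: (i) $X = A^{GD}AA^{-}$; (ii) $XAX =X$, $XA= A^{GD}A$, $AX = AA^{-}$, and $AXA = A$; (iii) $XAX =X$, $XA= A^{GD}A$, and $AX = AA^{-}$; (iv) $A^{GD}AX =X$, $XA= A^{GD}A$, $AX = AA^{-}$, and $XAA^{-} = X$.
   Context: For $A\in\mathbb{C}^{n\times n}$, $ind(A)$ is the smallest nonnegative integer $k$ with $\mathrm{rank}(A^k)=\mathrm{rank}(A^{k+1})$. $A\{1\}$ is the set of matrices $X$ with $AXA=A$. With $k=ind(A)$, $A\{GD\}$ is the set of G-Drazin inverses of $A$: matrices $X$ with $AXA=A$, $XA^{k+1}=A^k$, $A^{k+1}X=A^k$. *)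

theory Defs
  imports "HOL-Analysis.Analysis"
begin

definition matpow :: "'a::comm_ring_1^'n^'n \<Rightarrow> nat \<Rightarrow> 'a^'n^'n" where
  "matpow A k = ((\<lambda>M. A ** M) ^^ k) (mat 1)"

definition ind :: "'a::field^'n^'n \<Rightarrow> nat" where
  "ind A = (LEAST k. rank (matpow A k) = rank (matpow A (Suc k)))"

definition inner_inverses :: "'a::field^'n^'n \<Rightarrow> ('a^'n^'n) set" where
  "inner_inverses A = {X. A ** X ** A = A}"

definition gdrazin_inverses :: "'a::field^'n^'n \<Rightarrow> ('a^'n^'n) set" where
  "gdrazin_inverses A = {X. A ** X ** A = A
      \<and> X ** matpow A (Suc (ind A)) = matpow A (ind A)
      \<and> matpow A (Suc (ind A)) ** X = matpow A (ind A)}"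

end

theory Submission
  imports Defs
begin

theorem theorem2p8:
  fixes A Am AGD X :: "complex^'n^'n"
  assumes "Am \<in> inner_inverses A"
    and "AGD \<in> gdrazin_inverses A"
  shows "(X = AGD ** A ** Am
          \<longleftrightarrow> X ** A ** X = X \<and> X ** A = AGD ** A \<and> A ** X = A ** Am \<and> A ** X ** A = A)
       \<and> (X ** A ** X = X \<and> X ** A = AGD ** A \<and> A ** X = A ** Am \<and> A ** X ** A = A
          \<longleftrightarrow> X ** A ** X = X \<and> X ** A = AGD ** A \<and> A ** X = A ** Am)
       \<and> (X ** A ** X = X \<and> X ** A = AGD ** A \<and> A ** X = A ** Am
          \<longleftrightarrow> AGD ** A ** X = X \<and> X ** A = AGD ** A \<and> A ** X = A ** Am \<and> X ** A ** Am = X)"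
proof -
  have a1: "A ** Am ** A = A" using assms(1) by (simp add: inner_inverses_def)
  have a2: "A ** AGD ** A = A" using assms(2) by (simp add: gdrazin_inverses_def)
  note as = matrix_mul_assoc
  have i_ii: "X ** A ** X = X \<and> X ** A = AGD ** A \<and> A ** X = A ** Am \<and> A ** X ** A = A"
    if "X = AGD ** A ** Am"
  proof -
    have xa: "X ** A = AGD ** A" using that a1 by (metis as)
    have ax: "A ** X = A ** Am" using that a2 by (metis as)
    have "X ** A ** X = AGD ** A ** AGD ** A ** Am" using xa that by (simp add: as)
    also have "\<dots> = X" using that a2 by (metis as)
    finally show ?thesis using xa ax a1 by (metis as)
  qed
  have iii_i: "X = AGD ** A ** Am"
    if "X ** A ** X = X" "X ** A = AGD ** A" "A ** X = A ** Am"
    using that by (metis as)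
  have iii_iv: "AGD ** A ** X = X \<and> X ** A ** Am = X"
    if "X ** A ** X = X" "X ** A = AGD ** A" "A ** X = A ** Am"
    using that by (metis as)
  have iv_iii: "X ** A ** X = X"
    if "X ** A = AGD ** A" "A ** X = A ** Am" "X ** A ** Am = X"
    using that by (metis as)
  have ax_a: "A ** X ** A = A" if "A ** X = A ** Am" using that a1 by simp
  show ?thesis using i_ii iii_i iii_iv iv_iii ax_a by blast
qed

end
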